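(* Let $f$ be a face of a regular polygon surface all of whose faces have degree five. If $f$ has positive facial curvature, then every vertex incident to $f$ has degree three. Moreover, if $f$ is incident to a vertex of negative vertex curvature, then $f$ has non-positive facial curvature.
   Context: A regular polygon surface (RPS) is a triple $(\Sigma,\Gamma,\psi)$ where $\Gamma$ is a finite graph embedded in a closed surface $\Sigma$ so that every face (component of $\Sigma\setminus\Gamma$) has closure a closed $2$-cell, the closures of two faces meet in the empty set, a vertex, or an edge, and $\psi:\Sigma\to\mathbb{R}^3$ is continuous and maps each face of degree $k$ (number of incident edges) onto a regular Euclidean $k$-gon with unit edge lengths; the images of two adjacent faces meet in exactly one vertex or exactly one edge with its endpoints. The vertex curvature $k_v$ of a vertex $v$ is $2\pi$ minus the sum, over faces containing $v$, of the interior angle at $v$ of the regular polygon that is the image of that face. The facial curvature of a face $f$ is $k_f=\sum_{v\in f} k_v/d_v$, summing over vertices $v$ incident to $f$, where $d_v$ is the degree of $v$. *)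

theory Defs
  imports "HOL-Analysis.Analysis"
begin

text \<open>Faces are indexed by a finite set F; bd f is the boundary cycle of face f
  (list of its vertices in cyclic order). p gives the positions in R^3 of the
  vertices under the realisation psi.\<close>

definition face_edges :: "('f \<Rightarrow> 'v list) \<Rightarrow> 'f \<Rightarrow> 'v set set" where
  "face_edges bd f =
     {{bd f ! i, bd f ! ((i + 1) mod length (bd f))} | i. i < length (bd f)}"

definition rps_vertices :: "'f set \<Rightarrow> ('f \<Rightarrow> 'v list) \<Rightarrow> 'v set" where
  "rps_vertices F bd = (\<Union>f\<in>F. set (bd f))"

definition rps_edges :: "'f set \<Rightarrow> ('f \<Rightarrow> 'v list) \<Rightarrow> 'v set set" where
  "rps_edges F bd = (\<Union>f\<in>F. face_edges bd f)"

definition faces_at :: "'f set \<Rightarrow> ('f \<Rightarrow> 'v list) \<Rightarrow> 'v \<Rightarrow> 'f set" where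
  "faces_at F bd v = {f\<in>F. v \<in> set (bd f)}"

definition vdeg :: "'f set \<Rightarrow> ('f \<Rightarrow> 'v list) \<Rightarrow> 'v \<Rightarrow> nat" where
  "vdeg F bd v = card {e \<in> rps_edges F bd. v \<in> e}"

text \<open>The list xs of points is (in this cyclic order) the vertex list of a regular
  Euclidean k-gon with unit edge length, k = length xs.\<close>
definition regular_unit_polygon :: "(real^3) list \<Rightarrow> bool" where
  "regular_unit_polygon xs \<longleftrightarrow>
     (let k = length xs in k \<ge> 3 \<and>
       (\<exists>c u w. norm u = 1 \<and> norm w = 1 \<and> inner u w = 0 \<and>
          (\<forall>j<k. xs ! j = c + (1 / (2 * sin (pi / real k))) *\<^sub>R
                 (cos (2 * pi * real j / real k) *\<^sub>R u + sin (2 * pi * real j / real k) *\<^sub>R w))))"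

definition reg_angle :: "nat \<Rightarrow> real" where
  "reg_angle k = (real k - 2) * pi / real k"

definition is_rps :: "'f set \<Rightarrow> ('f \<Rightarrow> 'v list) \<Rightarrow> ('v \<Rightarrow> real^3) \<Rightarrow> bool" where
  "is_rps F bd p \<longleftrightarrow>
     finite F \<and> F \<noteq> {} \<and>
     \<comment> \<open>each face closure is a closed 2-cell bounded by a simple cycle\<close>
     (\<forall>f\<in>F. distinct (bd f) \<and> length (bd f) \<ge> 3) \<and>
     \<comment> \<open>closed surface: every edge borders exactly two faces\<close>
     (\<forall>f\<in>F. \<forall>e\<in>face_edges bd f. card {g\<in>F. e \<in> face_edges bd g} = 2) \<and>
     \<comment> \<open>closed surface: the faces around each vertex form a single cycle (connected link)\<close>
     (\<forall>v\<in>rps_vertices F bd. \<forall>S. S \<subseteq> faces_at F bd v \<and> S \<noteq> {} \<and>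
        (\<forall>f\<in>S. \<forall>g\<in>faces_at F bd v.
            (\<exists>e. v \<in> e \<and> e \<in> face_edges bd f \<and> e \<in> face_edges bd g) \<longrightarrow> g \<in> S)
        \<longrightarrow> S = faces_at F bd v) \<and>
     \<comment> \<open>closures of two distinct faces meet in nothing, a vertex, or an edge\<close>
     (\<forall>f\<in>F. \<forall>g\<in>F. f \<noteq> g \<longrightarrow>
        (let I = set (bd f) \<inter> set (bd g) in
          I = {} \<or> (\<exists>v. I = {v}) \<or> (I \<in> face_edges bd f \<and> I \<in> face_edges bd g))) \<and>
     \<comment> \<open>realisation: each face is mapped onto a regular unit polygon\<close>
     (\<forall>f\<in>F. regular_unit_polygon (map p (bd f))) \<and>
     \<comment> \<open>images of adjacent faces meet exactly in the image of the common vertex / edge\<close>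
     (\<forall>f\<in>F. \<forall>g\<in>F. f \<noteq> g \<longrightarrow> set (bd f) \<inter> set (bd g) \<noteq> {} \<longrightarrow>
        convex hull (p ` set (bd f)) \<inter> convex hull (p ` set (bd g))
          = convex hull (p ` (set (bd f) \<inter> set (bd g))))"

definition vertex_curvature :: "'f set \<Rightarrow> ('f \<Rightarrow> 'v list) \<Rightarrow> 'v \<Rightarrow> real" where
  "vertex_curvature F bd v =
     2 * pi - (\<Sum>f\<in>faces_at F bd v. reg_angle (length (bd f)))"

definition facial_curvature :: "'f set \<Rightarrow> ('f \<Rightarrow> 'v list) \<Rightarrow> 'f \<Rightarrow> real" where
  "facial_curvature F bd f =
     (\<Sum>v\<in>set (bd f). vertex_curvature F bd v / real (vdeg F bd v))"

end

theory Submission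
  imports Defs
begin

lemma cos_sum2: "cos (a::real) + cos (a + 2*th) = 2 * cos th * cos (a + th)"
proof -
  have "cos (a + 2*th) = cos ((a+th)+th)" by (simp add: algebra_simps)
  moreover have "cos a = cos ((a+th)-th)" by simp
  ultimately show ?thesis using cos_add[of "a+th" th] cos_diff[of "a+th" th] by (simp add: algebra_simps)
qed

lemma sin_sum2: "sin (a::real) + sin (a + 2*th) = 2 * cos th * sin (a + th)"
proof -
  have "sin (a + 2*th) = sin ((a+th)+th)" by (simp add: algebra_simps)
  moreover have "sin a = sin ((a+th)-th)" by simp
  ultimately show ?thesis using sin_add[of "a+th" th] sin_diff[of "a+th" th] by (simp add: algebra_simps)
qed

lemma vec3:
  fixes c u w :: "'a::real_vector"
  assumes "C0 + C2 = t * C1" "S0 + S2 = t * S1"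
  shows "(c + r *\<^sub>R (C0 *\<^sub>R u + S0 *\<^sub>R w)) + (c + r *\<^sub>R (C2 *\<^sub>R u + S2 *\<^sub>R w))
         - t *\<^sub>R (c + r *\<^sub>R (C1 *\<^sub>R u + S1 *\<^sub>R w)) = (2 - t) *\<^sub>R c"
proof -
  have "(c + r *\<^sub>R (C0 *\<^sub>R u + S0 *\<^sub>R w)) + (c + r *\<^sub>R (C2 *\<^sub>R u + S2 *\<^sub>R w))
         - t *\<^sub>R (c + r *\<^sub>R (C1 *\<^sub>R u + S1 *\<^sub>R w)) =
        (2 - t) *\<^sub>R c + r *\<^sub>R ((C0 + C2 - t * C1) *\<^sub>R u + (S0 + S2 - t*S1) *\<^sub>R w)"
    by (simp add: algebra_simps scaleR_add_left scaleR_diff_left scaleR_2)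
  then show ?thesis using assms by simp
qed

lemma vecneq:
  fixes c u w :: "'a::real_inner"
  assumes "norm u = 1" "norm w = 1" "inner u w = 0" "r \<noteq> 0" "(C, S) \<noteq> (C', S')"
  shows "c + r *\<^sub>R (C *\<^sub>R u + S *\<^sub>R w) \<noteq> c + r *\<^sub>R (C' *\<^sub>R u + S' *\<^sub>R w)"
proof
  assume "c + r *\<^sub>R (C *\<^sub>R u + S *\<^sub>R w) = c + r *\<^sub>R (C' *\<^sub>R u + S' *\<^sub>R w)"
  then have "r *\<^sub>R (C *\<^sub>R u + S *\<^sub>R w) = r *\<^sub>R (C' *\<^sub>R u + S' *\<^sub>R w)" by simp
  then have "C *\<^sub>R u + S *\<^sub>R w = C' *\<^sub>R u + S' *\<^sub>R w" using assms(4) by simp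
  then have e: "(C - C') *\<^sub>R u + (S - S') *\<^sub>R w = 0"
    by (simp add: algebra_simps scaleR_diff_left)
  have uu: "inner u u = 1" using assms(1) by (simp add: norm_eq_sqrt_inner)
  have ww: "inner w w = 1" using assms(2) by (simp add: norm_eq_sqrt_inner)
  have "inner u ((C - C') *\<^sub>R u + (S - S') *\<^sub>R w) = C - C'"
    using uu assms(3) by (simp add: inner_add_right)
  moreover have "inner w ((C - C') *\<^sub>R u + (S - S') *\<^sub>R w) = S - S'"
    using ww assms(3) by (simp add: inner_add_right inner_commute)
  ultimately show False using e assms(5) by simp
qed

lemma cs_neq: assumes "cos ((a::real) - b) \<noteq> 1" shows "(cos a, sin a) \<noteq> (cos b, sin b)"
proof
  assume "(cos a, sin a) = (cos b, sin b)"
  then have "cos a = cos b" "sin a = sin b" by auto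
  then have "cos (a - b) = cos b * cos b + sin b * sin b" using cos_diff[of a b] by simp
  also have "\<dots> = 1" by (rule sin_cos_squared_add3)
  finally have "cos (a - b) = 1" .

  then show False using assms by simp
qed

lemma rec_gen:
  fixes a b c d K :: "'a::real_vector"
  assumes "a + c - t *\<^sub>R b = K" "b + d - t *\<^sub>R c = K"
  shows "d - a = (1 + t) *\<^sub>R (c - b)"
proof -
  have "d - a = (b + d - t *\<^sub>R c) - (a + c - t *\<^sub>R b) + (1 + t) *\<^sub>R (c - b)"
    by (simp add: algebra_simps scaleR_add_left)
  then show ?thesis using assms by simp
qed

definition kk :: real where "kk = 1 + 2 * cos (2 * pi / 5)"

lemma reg5:
  assumes "regular_unit_polygon [q0, q1, q2, q3, q4]"
  shows "q3 - q0 = kk *\<^sub>R (q2 - q1) \<and> q4 - q1 = kk *\<^sub>R (q3 - q2) \<and> q0 - q2 = kk *\<^sub>R (q4 - q3)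
       \<and> q1 - q3 = kk *\<^sub>R (q0 - q4) \<and> q2 - q4 = kk *\<^sub>R (q1 - q0)
       \<and> q0 \<noteq> q1 \<and> q1 \<noteq> q2 \<and> q2 \<noteq> q3 \<and> q3 \<noteq> q4 \<and> q4 \<noteq> q0"
proof -
  define th where "th = 2 * pi / 5"
  have len5: "length [q0, q1, q2, q3, q4] = 5" by simp
  define t where "t = 2 * cos th"
  have "\<exists>c u w. norm u = 1 \<and> norm w = 1 \<and> inner u w = 0 \<and>
    (\<forall>j<5. [q0, q1, q2, q3, q4] ! j = c + (1 / (2 * sin (pi / 5))) *\<^sub>R
                 (cos (2 * pi * real j / 5) *\<^sub>R u + sin (2 * pi * real j / 5) *\<^sub>R w))"
    using assms unfolding regular_unit_polygon_def Let_def len5 of_nat_numeral by blast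
  then obtain c u w where nu: "norm u = 1" and nw: "norm w = 1" and uw: "inner u w = 0"
    and P: "\<forall>j<5. [q0, q1, q2, q3, q4] ! j = c + (1 / (2 * sin (pi / 5))) *\<^sub>R
                 (cos (2 * pi * real j / 5) *\<^sub>R u + sin (2 * pi * real j / 5) *\<^sub>R w)"
    by blast
  define r where "r = 1 / (2 * sin (pi / 5))"
  have "sin (pi/5) > 0" by (rule sin_gt_zero) auto
  then have r0: "r \<noteq> 0" unfolding r_def by simp
  let ?Q = "\<lambda>a. c + r *\<^sub>R (cos a *\<^sub>R u + sin a *\<^sub>R w)"
  have e0: "q0 = ?Q 0" using P[rule_format, of 0] unfolding r_def by simp
  have e1: "q1 = ?Q th" using P[rule_format, of 1] unfolding r_def th_def by simp
  have e2: "q2 = ?Q (2*th)" using P[rule_format, of 2] unfolding r_def th_def by simp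
  have e3: "q3 = ?Q (3*th)" using P[rule_format, of 3] unfolding r_def th_def by simp
  have e4: "q4 = ?Q (4*th)" using P[rule_format, of 4] unfolding r_def th_def by simp
  have e5: "q0 = ?Q (5*th)" using e0 unfolding th_def by simp
  have e6: "q1 = ?Q (6*th)"
  proof -
    have h: "6*th = th + 2*pi" unfolding th_def by simp
    have "cos (6*th) = cos th" by (subst h) simp
    moreover have "sin (6*th) = sin th" by (subst h) simp
    ultimately show ?thesis using e1 by simp
  qed
  have gen: "?Q a + ?Q (a + 2*th) - t *\<^sub>R ?Q (a + th) = (2 - t) *\<^sub>R c" for a
    by (rule vec3) (simp_all add: cos_sum2 sin_sum2 t_def)
  have a1: "th + 2*th = 3*th" "th + th = 2*th" "2*th + 2*th = 4*th" "2*th+th = 3*th"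
    "3*th + 2*th = 5*th" "3*th+th = 4*th" "4*th + 2*th = 6*th" "4*th+th = 5*th" by simp_all
  have s0: "q0 + q2 - t *\<^sub>R q1 = (2 - t) *\<^sub>R c" using gen[of 0] by (simp only: e0 e1 e2 add_0_left)
  have s1: "q1 + q3 - t *\<^sub>R q2 = (2 - t) *\<^sub>R c" using gen[of th] by (simp only: a1 e1 e2 e3)
  have s2: "q2 + q4 - t *\<^sub>R q3 = (2 - t) *\<^sub>R c" using gen[of "2*th"] by (simp only: a1 e2 e3 e4)
  have s3: "q3 + q0 - t *\<^sub>R q4 = (2 - t) *\<^sub>R c" using gen[of "3*th"] by (simp only: a1 e3 e4 e5)
  have s4: "q4 + q1 - t *\<^sub>R q0 = (2 - t) *\<^sub>R c" using gen[of "4*th"] by (simp only: a1 e4 e5 e6)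
  have kt: "kk = 1 + t" unfolding kk_def t_def th_def by simp
  have r1: "q3 - q0 = kk *\<^sub>R (q2 - q1)" unfolding kt by (rule rec_gen[OF s0 s1])
  have r2: "q4 - q1 = kk *\<^sub>R (q3 - q2)" unfolding kt by (rule rec_gen[OF s1 s2])
  have r3: "q0 - q2 = kk *\<^sub>R (q4 - q3)" unfolding kt by (rule rec_gen[OF s2 s3])
  have r4: "q1 - q3 = kk *\<^sub>R (q0 - q4)" unfolding kt by (rule rec_gen[OF s3 s4])
  have s5: "q0 + q2 - t *\<^sub>R q1 = (2 - t) *\<^sub>R c" by (rule s0)
  have r5: "q2 - q4 = kk *\<^sub>R (q1 - q0)" unfolding kt by (rule rec_gen[OF s4 s5])
  have "cos th < cos 0" by (rule cos_monotone_0_pi) (auto simp: th_def)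
  then have cth: "cos th \<noteq> 1" by simp
  have h4: "4*th = 2*pi - th" unfolding th_def by simp
  have c4: "cos (4*th) \<noteq> 1" using cth by (subst h4) simp
  have n1: "q0 \<noteq> q1" unfolding e0 e1 by (rule vecneq[OF nu nw uw r0 cs_neq]) (use cth in simp)
  have n2: "q1 \<noteq> q2" unfolding e1 e2 by (rule vecneq[OF nu nw uw r0 cs_neq]) (use cth in \<open>simp add: algebra_simps\<close>)
  have n3: "q2 \<noteq> q3" unfolding e2 e3 by (rule vecneq[OF nu nw uw r0 cs_neq]) (use cth in \<open>simp add: algebra_simps\<close>)
  have n4: "q3 \<noteq> q4" unfolding e3 e4 by (rule vecneq[OF nu nw uw r0 cs_neq]) (use cth in \<open>simp add: algebra_simps\<close>)
  have n5: "q4 \<noteq> q0" unfolding e4 e0 by (rule vecneq[OF nu nw uw r0 cs_neq]) (use c4 in simp)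
  show ?thesis using r1 r2 r3 r4 r5 n1 n2 n3 n4 n5 by blast
qed

lemma len5_list: "length xs = 5 \<Longrightarrow> \<exists>a0 a1 a2 a3 a4. xs = [a0,a1,a2,a3,a4]"
  by (auto simp: length_Suc_conv numeral_eq_Suc)

lemma fe5: "bd g = [a0,a1,a2,a3,a4] \<Longrightarrow> face_edges bd g = {{a0,a1},{a1,a2},{a2,a3},{a3,a4},{a4,a0}}"
proof -
  assume h: "bd g = [a0,a1,a2,a3,a4]"
  have "face_edges bd g = (\<lambda>i. {bd g ! i, bd g ! ((i+1) mod 5)}) ` {..<5}"
    unfolding face_edges_def using h by auto
  also have "{..<5::nat} = {0,1,2,3,4}" by auto
  finally show ?thesis using h by simp
qed

lemma card_filter_sum: "finite A \<Longrightarrow> card {x\<in>A. P x} = (\<Sum>x\<in>A. if P x then 1 else 0)"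
  by (simp add: sum.inter_filter[symmetric])

locale rps5 =
  fixes F :: "'f set" and bd :: "'f \<Rightarrow> 'v list" and p :: "'v \<Rightarrow> real^3"
  assumes rps: "is_rps F bd p" and five: "\<forall>g\<in>F. length (bd g) = 5"
begin

abbreviation E where "E g \<equiv> face_edges bd g"
abbreviation N where "N v \<equiv> faces_at F bd v"

lemma finF: "finite F" using rps unfolding is_rps_def by (elim conjE)
lemma distF: "g \<in> F \<Longrightarrow> distinct (bd g)" using rps unfolding is_rps_def by (elim conjE) simp
lemma card2: "\<forall>f\<in>F. \<forall>e\<in>face_edges bd f. card {g\<in>F. e \<in> face_edges bd g} = 2"
  using rps unfolding is_rps_def by (elim conjE)
lemma linkax: "\<forall>v\<in>rps_vertices F bd. \<forall>S. S \<subseteq> faces_at F bd v \<and> S \<noteq> {} \<and>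
        (\<forall>f\<in>S. \<forall>g\<in>faces_at F bd v.
            (\<exists>e. v \<in> e \<and> e \<in> face_edges bd f \<and> e \<in> face_edges bd g) \<longrightarrow> g \<in> S)
        \<longrightarrow> S = faces_at F bd v"
  using rps unfolding is_rps_def by (elim conjE)
lemma interax: "\<forall>f\<in>F. \<forall>g\<in>F. f \<noteq> g \<longrightarrow>
        (let I = set (bd f) \<inter> set (bd g) in
          I = {} \<or> (\<exists>v. I = {v}) \<or> (I \<in> face_edges bd f \<and> I \<in> face_edges bd g))"
  using rps unfolding is_rps_def by (elim conjE)
lemma regax: "\<forall>f\<in>F. regular_unit_polygon (map p (bd f))"
  using rps unfolding is_rps_def by (elim conjE)
lemma hullax: "\<forall>f\<in>F. \<forall>g\<in>F. f \<noteq> g \<longrightarrow> set (bd f) \<inter> set (bd g) \<noteq> {} \<longrightarrow>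
        convex hull (p ` set (bd f)) \<inter> convex hull (p ` set (bd g))
          = convex hull (p ` (set (bd f) \<inter> set (bd g)))"
  using rps unfolding is_rps_def by (elim conjE)

lemma list5: assumes "g \<in> F"
  obtains a0 a1 a2 a3 a4 where "bd g = [a0,a1,a2,a3,a4]" "distinct [a0,a1,a2,a3,a4]"
proof -
  have "length (bd g) = 5" using five assms by blast
  then obtain a0 a1 a2 a3 a4 where h: "bd g = [a0,a1,a2,a3,a4]" using len5_list by blast
  moreover have "distinct (bd g)" using distF assms by blast
  ultimately show ?thesis using that by simp
qed

lemma edge_form: "e \<in> E g \<Longrightarrow> \<exists>a b. e = {a,b}"
  unfolding face_edges_def by blast

lemma finE: assumes "g \<in> F" shows "finite (E g)"
proof -
  obtain a0 a1 a2 a3 a4 where h: "bd g = [a0,a1,a2,a3,a4]" "distinct [a0,a1,a2,a3,a4]" by (rule list5[OF assms])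
  show ?thesis unfolding fe5[of bd g, OF h(1)] by simp
qed

definition nb5 :: "'v \<Rightarrow> 'v \<Rightarrow> 'v \<Rightarrow> 'v \<Rightarrow> 'v \<Rightarrow> 'v \<Rightarrow> 'v \<Rightarrow> bool" where
  "nb5 a0 a1 a2 a3 a4 v y \<longleftrightarrow> (v=a0 \<and> (y=a1 \<or> y=a4)) \<or> (v=a1 \<and> (y=a0 \<or> y=a2)) \<or> (v=a2 \<and> (y=a1 \<or> y=a3))
       \<or> (v=a3 \<and> (y=a2 \<or> y=a4)) \<or> (v=a4 \<and> (y=a3 \<or> y=a0))"

lemma nbc: assumes "bd g = [a0,a1,a2,a3,a4]"
  shows "{v,y} \<in> E g \<longleftrightarrow> nb5 a0 a1 a2 a3 a4 v y"
  unfolding fe5[of bd g, OF assms] nb5_def insert_iff doubleton_eq_iff empty_iff by auto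

lemma edge_mem: assumes "g \<in> F" "{v,y} \<in> E g"
  shows "v \<in> set (bd g) \<and> y \<in> set (bd g) \<and> v \<noteq> y"
proof -
  obtain a0 a1 a2 a3 a4 where h: "bd g = [a0,a1,a2,a3,a4]" "distinct [a0,a1,a2,a3,a4]"
    by (rule list5[OF assms(1)])
  have "nb5 a0 a1 a2 a3 a4 v y" using assms(2) nbc[OF h(1)] by blast
  then show ?thesis using h unfolding nb5_def by auto
qed

lemma two_nbrs: assumes "g \<in> F" "{v,y} \<in> E g" "{v,z} \<in> E g" "{v,w} \<in> E g" "y \<noteq> z"
  shows "w = y \<or> w = z"
proof -
  obtain a0 a1 a2 a3 a4 where h: "bd g = [a0,a1,a2,a3,a4]" "distinct [a0,a1,a2,a3,a4]"
    by (rule list5[OF assms(1)])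
  have "nb5 a0 a1 a2 a3 a4 v y" "nb5 a0 a1 a2 a3 a4 v z" "nb5 a0 a1 a2 a3 a4 v w"
    using assms(2-4) nbc[OF h(1)] by blast+
  then show ?thesis using h assms(5) unfolding nb5_def by auto
qed

lemma nbrs_exist: assumes "g \<in> F" "v \<in> set (bd g)"
  shows "\<exists>y z. y \<noteq> z \<and> {v,y} \<in> E g \<and> {v,z} \<in> E g"
proof -
  obtain a0 a1 a2 a3 a4 where h: "bd g = [a0,a1,a2,a3,a4]" "distinct [a0,a1,a2,a3,a4]"
    by (rule list5[OF assms(1)])
  have "\<exists>y z. y \<noteq> z \<and> nb5 a0 a1 a2 a3 a4 v y \<and> nb5 a0 a1 a2 a3 a4 v z"
    using assms(2) h unfolding nb5_def by auto
  then show ?thesis using nbc[OF h(1)] by blast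
qed

lemma other_nbr: assumes "g \<in> F" "{v,y} \<in> E g" shows "\<exists>z. z \<noteq> y \<and> {v,z} \<in> E g"
proof -
  have "v \<in> set (bd g)" using edge_mem assms by blast
  then obtain a b where "a \<noteq> b" "{v,a} \<in> E g" "{v,b} \<in> E g" using nbrs_exist assms(1) by blast
  then show ?thesis by metis
qed

lemma edges_at: assumes "g \<in> F" "v \<in> set (bd g)" shows "card {e\<in>E g. v \<in> e} = 2"
proof -
  obtain y z where yz: "y \<noteq> z" "{v,y} \<in> E g" "{v,z} \<in> E g" using nbrs_exist assms by blast
  have "{e\<in>E g. v \<in> e} = {{v,y},{v,z}}"
  proof (rule set_eqI, rule iffI)
    fix e assume "e \<in> {e\<in>E g. v \<in> e}"
    then have e: "e \<in> E g" "v \<in> e" by auto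
    then obtain a b where ab: "e = {a,b}" using edge_form by blast
    then obtain w where "e = {v,w}" using e(2) by auto
    then show "e \<in> {{v,y},{v,z}}" using two_nbrs[OF assms(1) yz(2,3) _ yz(1)] e(1) by auto
  qed (use yz in auto)
  moreover have "{v,y} \<noteq> {v,z}" using yz(1) by (auto simp: doubleton_eq_iff)
  ultimately show ?thesis by simp
qed

lemma regR_comb: assumes "distinct [a0,a1,a2,a3,a4]" "nb5 a0 a1 a2 a3 a4 y x" "nb5 a0 a1 a2 a3 a4 y z"
  "nb5 a0 a1 a2 a3 a4 z w" "x \<noteq> z" "y \<noteq> w"
  shows "(y,z,x,w) \<in> {(a0,a1,a4,a2), (a1,a2,a0,a3), (a2,a3,a1,a4), (a3,a4,a2,a0), (a4,a0,a3,a1),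
     (a1,a0,a2,a4), (a2,a1,a3,a0), (a3,a2,a4,a1), (a4,a3,a0,a2), (a0,a4,a1,a3)}"
  using assms(3)
proof (unfold nb5_def, elim disjE conjE)
qed (use assms in \<open>auto simp: nb5_def\<close>)

lemma negeq: fixes a b c d :: "'a::real_vector"
  shows "a - b = k *\<^sub>R (c - d) \<Longrightarrow> b - a = k *\<^sub>R (d - c)"
  by (metis minus_diff_eq scaleR_minus_right)

lemma regR: assumes "g \<in> F" "{x,y} \<in> E g" "{y,z} \<in> E g" "{z,w} \<in> E g" "x \<noteq> z" "y \<noteq> w"
  shows "p w - p x = kk *\<^sub>R (p z - p y)"
proof -
  obtain a0 a1 a2 a3 a4 where h: "bd g = [a0,a1,a2,a3,a4]" "distinct [a0,a1,a2,a3,a4]"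
    by (rule list5[OF assms(1)])
  have "regular_unit_polygon (map p (bd g))" using regax assms(1) by blast
  then have R: "regular_unit_polygon [p a0, p a1, p a2, p a3, p a4]" using h by simp
  note r = reg5[OF R]
  have r1: "p a3 - p a0 = kk *\<^sub>R (p a2 - p a1)" "p a4 - p a1 = kk *\<^sub>R (p a3 - p a2)"
     "p a0 - p a2 = kk *\<^sub>R (p a4 - p a3)" "p a1 - p a3 = kk *\<^sub>R (p a0 - p a4)"
     "p a2 - p a4 = kk *\<^sub>R (p a1 - p a0)" using r by blast+
  note r2 = negeq[OF r1(1)] negeq[OF r1(2)] negeq[OF r1(3)] negeq[OF r1(4)] negeq[OF r1(5)]
  have "{y,x} \<in> E g" using assms(2) by (simp add: insert_commute)
  then have "nb5 a0 a1 a2 a3 a4 y x" "nb5 a0 a1 a2 a3 a4 y z" "nb5 a0 a1 a2 a3 a4 z w"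
    using assms(3,4) nbc[OF h(1)] by blast+
  from regR_comb[OF h(2) this assms(5,6)] show ?thesis
  proof (elim insertE emptyE)
  qed (simp_all add: r1 r2)
qed

lemma pdist: assumes "g \<in> F" "{x,y} \<in> E g" shows "p x \<noteq> p y"
proof -
  obtain a0 a1 a2 a3 a4 where h: "bd g = [a0,a1,a2,a3,a4]" "distinct [a0,a1,a2,a3,a4]"
    by (rule list5[OF assms(1)])
  have "regular_unit_polygon (map p (bd g))" using regax assms(1) by blast
  then have R: "regular_unit_polygon [p a0, p a1, p a2, p a3, p a4]" using h by simp
  note r = reg5[OF R]
  have "nb5 a0 a1 a2 a3 a4 x y" using assms(2) nbc[OF h(1)] by blast
  then show ?thesis
  proof (unfold nb5_def, elim disjE conjE)
  qed (use r in auto)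
qed

end

lemma tele: fixes a b x1 x2 x3 x4 :: "'a::real_vector"
  shows "b - a = (b - x4) + (x4 - x3) + (x3 - x2) + (x2 - x1) + (x1 - a)"
  by (simp add: algebra_simps)

lemma tele0: fixes v0 v1 v2 v3 v4 :: "'a::real_vector"
  shows "k *\<^sub>R (v0 - v4) + k *\<^sub>R (v4 - v3) + k *\<^sub>R (v3 - v2) + k *\<^sub>R (v2 - v1) + k *\<^sub>R (v1 - v0) = 0"
  by (simp add: algebra_simps)

context rps5 begin

lemma two_faces: assumes "g \<in> F" "e \<in> E g" "h1 \<in> F" "h2 \<in> F" "h1 \<noteq> h2" "e \<in> E h1" "e \<in> E h2"
  "k \<in> F" "e \<in> E k" shows "k = h1 \<or> k = h2"
proof (rule ccontr)
  assume nk: "\<not> (k = h1 \<or> k = h2)"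
  have c: "card {h\<in>F. e \<in> E h} = 2" using card2 assms(1,2) by blast
  have "{h1,h2,k} \<subseteq> {h\<in>F. e \<in> E h}" using assms by auto
  then have "card {h1,h2,k} \<le> 2" using c card_mono[OF finite_subset[OF _ finF]] by (metis (no_types, lifting) mem_Collect_eq subsetI)
  moreover have "card {h1,h2,k} = 3" using nk assms(5) by auto
  ultimately show False by simp
qed

lemma opp_exists: assumes "g \<in> F" "e \<in> E g" shows "\<exists>h\<in>F. h \<noteq> g \<and> e \<in> E h"
proof -
  have c: "card {h\<in>F. e \<in> E h} = 2" using card2 assms(1,2) by blast
  then obtain a b where ab: "{h\<in>F. e \<in> E h} = {a,b}" "a \<noteq> b" by (meson card_2_iff)
  have "g \<in> {a,b}" using ab(1) assms by blast
  then show ?thesis using ab by (metis (no_types, lifting) insertCI mem_Collect_eq)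
qed

lemma inter3: assumes "g \<in> F" "h \<in> F" "g \<noteq> h" "x \<noteq> y" "y \<noteq> z" "x \<noteq> z"
  "x \<in> set (bd g)" "y \<in> set (bd g)" "z \<in> set (bd g)" "x \<in> set (bd h)" "y \<in> set (bd h)" "z \<in> set (bd h)"
  shows False
proof -
  define I where "I = set (bd g) \<inter> set (bd h)"
  have xyz: "x \<in> I" "y \<in> I" "z \<in> I" using assms unfolding I_def by auto
  have "I = {} \<or> (\<exists>v. I = {v}) \<or> (I \<in> E g \<and> I \<in> E h)"
    using interax assms(1-3) unfolding I_def Let_def by blast
  then show False
  proof (elim disjE exE conjE)
    assume "I = {}" then show False using xyz by simp
  next
    fix v assume "I = {v}" then show False using xyz assms(4) by simp
  next
    assume "I \<in> E g"
    then obtain a b where "I = {a,b}" using edge_form by blast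
    then show False using xyz assms(4-6) by auto
  qed
qed

lemma edge_at2: assumes "g \<in> F" "v \<in> e" "e \<in> E g" "{v,y1} \<in> E g" "{v,y2} \<in> E g" "y1 \<noteq> y2"
  shows "e = {v,y1} \<or> e = {v,y2}"
proof -
  obtain a b where ab: "e = {a,b}" using edge_form assms(3) by blast
  then obtain w where w: "e = {v,w}" using assms(2) by (metis insert_commute insertE singletonD)
  then have "w = y1 \<or> w = y2" using two_nbrs[OF assms(1) assms(4,5) _ assms(6)] assms(3) by simp
  then show ?thesis using w by auto
qed

lemma finN: "finite (N v)"
  unfolding faces_at_def using finF by simp

lemma inN: "g \<in> F \<Longrightarrow> v \<in> set (bd g) \<Longrightarrow> g \<in> N v"
  unfolding faces_at_def by simp

lemma D3:
  assumes f: "f \<in> F" and e1: "{um,v} \<in> E f" and e2: "{v,up} \<in> E f" and d: "um \<noteq> up"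
    and gm: "Gm \<in> F" "Gm \<noteq> f" "{um,v} \<in> E Gm" and gp: "Gp \<in> F" "Gp \<noteq> f" "{v,up} \<in> E Gp"
    and c3: "card (N v) = 3"
  shows "\<exists>x. {v,x} \<in> E Gm \<and> {v,x} \<in> E Gp \<and> x \<noteq> um \<and> x \<noteq> up"
proof -
  have vf: "um \<in> set (bd f)" "v \<in> set (bd f)" "up \<in> set (bd f)" "um \<noteq> v" "v \<noteq> up"
    using edge_mem[OF f e1] edge_mem[OF f e2] by auto
  have vgm: "um \<in> set (bd Gm)" "v \<in> set (bd Gm)" using edge_mem[OF gm(1) gm(3)] by auto
  have vgp: "v \<in> set (bd Gp)" "up \<in> set (bd Gp)" using edge_mem[OF gp(1) gp(3)] by auto
  have neq: "Gm \<noteq> Gp"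
  proof
    assume "Gm = Gp"
    then show False using inter3[OF gm(1) f gm(2) vf(4) vf(5) d] vgm vgp vf by auto
  qed
  have sub: "{f,Gm,Gp} \<subseteq> N v" using inN f gm gp vf vgm vgp by auto
  have "card {f,Gm,Gp} = 3" using neq gm(2) gp(2) by auto
  then have Neq: "N v = {f,Gm,Gp}" using card_subset_eq[OF finN sub] c3 by simp
  have "{v,um} \<in> E Gm" using gm(3) by (simp add: insert_commute)
  then obtain x where x: "x \<noteq> um" "{v,x} \<in> E Gm" using other_nbr gm(1) by blast
  have xup: "x \<noteq> up"
  proof
    assume "x = up"
    then have "up \<in> set (bd Gm)" using edge_mem[OF gm(1) x(2)] by simp
    then show False using inter3[OF gm(1) f gm(2) vf(4) vf(5) d] vgm vf by auto
  qed
  obtain H where H: "H \<in> F" "H \<noteq> Gm" "{v,x} \<in> E H" using opp_exists[OF gm(1) x(2)] by blast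
  have "H \<in> N v" using inN H edge_mem[OF H(1) H(3)] by blast
  then have "H = f \<or> H = Gp" using Neq H(2) by auto
  moreover have "H \<noteq> f"
  proof
    assume "H = f"
    then have "{v,x} \<in> E f" using H by simp
    moreover have "{v,um} \<in> E f" using e1 by (simp add: insert_commute)
    ultimately have "x = um \<or> x = up" using two_nbrs[OF f _ e2 _ d] by blast
    then show False using x xup by blast
  qed
  ultimately have "H = Gp" by blast
  then show ?thesis using x xup H by blast
qed

end

context rps5 begin

lemma Glem:
  assumes f: "f \<in> F" and dist: "distinct [v0,v1,v2,v3,v4]"
    and e01: "{v0,v1} \<in> E f" and e12: "{v1,v2} \<in> E f" and e23: "{v2,v3} \<in> E f"
    and e34: "{v3,v4} \<in> E f" and e40: "{v4,v0} \<in> E f"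
    and c1: "card (N v1) = 3" and c2: "card (N v2) = 3" and c3: "card (N v3) = 3" and c4: "card (N v4) = 3"
  shows "card (N v0) = 3"
proof -
  obtain G0 where G0: "G0 \<in> F" "G0 \<noteq> f" "{v0,v1} \<in> E G0" using opp_exists[OF f e01] by blast
  obtain G1 where G1: "G1 \<in> F" "G1 \<noteq> f" "{v1,v2} \<in> E G1" using opp_exists[OF f e12] by blast
  obtain G2 where G2: "G2 \<in> F" "G2 \<noteq> f" "{v2,v3} \<in> E G2" using opp_exists[OF f e23] by blast
  obtain G3 where G3: "G3 \<in> F" "G3 \<noteq> f" "{v3,v4} \<in> E G3" using opp_exists[OF f e34] by blast
  obtain G4 where G4: "G4 \<in> F" "G4 \<noteq> f" "{v4,v0} \<in> E G4" using opp_exists[OF f e40] by blast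
  have d: "v0 \<noteq> v1" "v0 \<noteq> v2" "v0 \<noteq> v3" "v0 \<noteq> v4" "v1 \<noteq> v2" "v1 \<noteq> v3" "v1 \<noteq> v4"
    "v2 \<noteq> v3" "v2 \<noteq> v4" "v3 \<noteq> v4" using dist by auto
  obtain x1 where x1: "{v1,x1} \<in> E G0" "{v1,x1} \<in> E G1" "x1 \<noteq> v0" "x1 \<noteq> v2"
    using D3[OF f e01 e12 d(2) G0 G1 c1] by blast
  obtain x2 where x2: "{v2,x2} \<in> E G1" "{v2,x2} \<in> E G2" "x2 \<noteq> v1" "x2 \<noteq> v3"
    using D3[OF f e12 e23 d(6) G1 G2 c2] by blast
  obtain x3 where x3: "{v3,x3} \<in> E G2" "{v3,x3} \<in> E G3" "x3 \<noteq> v2" "x3 \<noteq> v4"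
    using D3[OF f e23 e34 d(9) G2 G3 c3] by blast
  obtain x4 where x4: "{v4,x4} \<in> E G3" "{v4,x4} \<in> E G4" "x4 \<noteq> v3" "x4 \<noteq> v0"
    using D3[OF f e34 e40 d(3)[symmetric] G3 G4 c4] by blast
  have q1: "p x2 - p x1 = kk *\<^sub>R (p v2 - p v1)"
    by (rule regR[OF G1(1)]) (use x1 x2 G1 in \<open>auto simp: insert_commute\<close>)
  have q2: "p x3 - p x2 = kk *\<^sub>R (p v3 - p v2)"
    by (rule regR[OF G2(1)]) (use x2 x3 G2 in \<open>auto simp: insert_commute\<close>)
  have q3: "p x4 - p x3 = kk *\<^sub>R (p v4 - p v3)"
    by (rule regR[OF G3(1)]) (use x3 x4 G3 in \<open>auto simp: insert_commute\<close>)
  have "{v0,v1} \<in> E G0" using G0 by simp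
  then obtain A where A: "A \<noteq> v1" "{v0,A} \<in> E G0" using other_nbr G0(1) by blast
  have "{v0,v4} \<in> E G4" using G4 by (simp add: insert_commute)
  then obtain B where B: "B \<noteq> v4" "{v0,B} \<in> E G4" using other_nbr G4(1) by blast
  have q0: "p x1 - p A = kk *\<^sub>R (p v1 - p v0)"
    by (rule regR[OF G0(1)]) (use A x1 G0 in \<open>auto simp: insert_commute\<close>)
  have q4: "p B - p x4 = kk *\<^sub>R (p v0 - p v4)"
    by (rule regR[OF G4(1)]) (use B x4 G4 in \<open>auto simp: insert_commute\<close>)
  have pAB: "p A = p B"
  proof -
    have "p B - p A = (p B - p x4) + (p x4 - p x3) + (p x3 - p x2) + (p x2 - p x1) + (p x1 - p A)"
      by (rule tele)
    also have "\<dots> = 0" unfolding q0 q1 q2 q3 q4 by (rule tele0)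
    finally show ?thesis by simp
  qed
  have vG0: "v0 \<in> set (bd G0)" "v1 \<in> set (bd G0)" "A \<in> set (bd G0)" "v0 \<noteq> A"
    using edge_mem[OF G0(1) G0(3)] edge_mem[OF G0(1) A(2)] by auto
  have vG4: "v0 \<in> set (bd G4)" "v4 \<in> set (bd G4)" "B \<in> set (bd G4)" "v0 \<noteq> B"
    using edge_mem[OF G4(1) G4(3)] edge_mem[OF G4(1) B(2)] by auto
  have vf: "v0 \<in> set (bd f)" "v1 \<in> set (bd f)" "v4 \<in> set (bd f)"
    using edge_mem[OF f e01] edge_mem[OF f e40] by auto
  have G04: "G0 \<noteq> G4"
  proof
    assume "G0 = G4"
    then show False using inter3[OF G0(1) f G0(2) d(1) d(7) d(4)] vG0 vG4 vf by auto
  qed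
  show ?thesis
  proof (cases "A = B")
    case True
    define S where "S = {f, G0, G4}"
    have v0V: "v0 \<in> rps_vertices F bd" unfolding rps_vertices_def using f vf by blast
    have SN: "S \<subseteq> N v0" unfolding S_def using inN f G0(1) G4(1) vf vG0 vG4 by auto
    have cl: "\<forall>h\<in>S. \<forall>g\<in>N v0. (\<exists>e. v0 \<in> e \<and> e \<in> E h \<and> e \<in> E g) \<longrightarrow> g \<in> S"
    proof (intro ballI impI)
      fix h g assume h: "h \<in> S" and g: "g \<in> N v0" and "\<exists>e. v0 \<in> e \<and> e \<in> E h \<and> e \<in> E g"
      then obtain e where e: "v0 \<in> e" "e \<in> E h" "e \<in> E g" by blast
      have gF: "g \<in> F" using g unfolding faces_at_def by simp
      have f01: "{v0,v1} \<in> E f" "{v0,v4} \<in> E f" using e01 e40 by (simp_all add: insert_commute)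
      have g0: "{v0,v1} \<in> E G0" "{v0,A} \<in> E G0" using G0 A by simp_all
      have g4: "{v0,v4} \<in> E G4" "{v0,A} \<in> E G4" using G4 B True by (simp_all add: insert_commute)
      have c01: "g = f \<or> g = G0" if "{v0,v1} \<in> E g"
        using two_faces[OF f f01(1) f G0(1) G0(2)[symmetric] f01(1) g0(1) gF that] .
      have c04: "g = f \<or> g = G4" if "{v0,v4} \<in> E g"
        using two_faces[OF f f01(2) f G4(1) G4(2)[symmetric] f01(2) g4(1) gF that] .
      have c0A: "g = G0 \<or> g = G4" if "{v0,A} \<in> E g"
        using two_faces[OF G0(1) g0(2) G0(1) G4(1) G04 g0(2) g4(2) gF that] .
      from h consider "h = f" | "h = G0" | "h = G4" unfolding S_def by blast
      then show "g \<in> S"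
      proof cases
        case 1
        then have "e = {v0,v1} \<or> e = {v0,v4}" using edge_at2[OF f e(1) _ f01 d(7)] e(2) by simp
        then show ?thesis using c01 c04 e(3) unfolding S_def by blast
      next
        case 2
        then have "e = {v0,v1} \<or> e = {v0,A}" using edge_at2[OF G0(1) e(1) _ g0 A(1)[symmetric]] e(2) by simp
        then show ?thesis using c01 c0A e(3) unfolding S_def by blast
      next
        case 3
        have "v4 \<noteq> A" using B True by simp
        then have "e = {v0,v4} \<or> e = {v0,A}" using edge_at2[OF G4(1) e(1) _ g4] e(2) 3 by simp
        then show ?thesis using c04 c0A e(3) unfolding S_def by blast
      qed
    qed
    have "S = N v0" using linkax v0V SN cl unfolding S_def by blast
    moreover have "card S = 3" unfolding S_def using G0(2) G4(2) G04 by auto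
    ultimately show ?thesis by simp
  next
    case False
    define I where "I = set (bd G0) \<inter> set (bd G4)"
    have v0I: "v0 \<in> I" unfolding I_def using vG0 vG4 by simp
    have "I = {} \<or> (\<exists>v. I = {v}) \<or> (I \<in> E G0 \<and> I \<in> E G4)"
      using interax G0(1) G4(1) G04 unfolding I_def Let_def by blast
    then show ?thesis
    proof (elim disjE exE conjE)
      assume "I = {}" then show ?thesis using v0I by simp
    next
      fix w assume Iw: "I = {w}"
      then have w: "w = v0" using v0I by simp
      have "convex hull (p ` set (bd G0)) \<inter> convex hull (p ` set (bd G4)) = convex hull (p ` I)"
        using hullax G0(1) G4(1) G04 v0I unfolding I_def by blast
      also have "\<dots> = {p v0}" using Iw w by simp
      finally have hh: "convex hull (p ` set (bd G0)) \<inter> convex hull (p ` set (bd G4)) = {p v0}" .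
      have "p A \<in> convex hull (p ` set (bd G0))" using vG0(3) by (simp add: hull_inc)
      moreover have "p A \<in> convex hull (p ` set (bd G4))" using vG4(3) pAB by (simp add: hull_inc)
      ultimately have "p A = p v0" using hh by blast
      then show ?thesis using pdist[OF G0(1) A(2)] by simp
    next
      assume I0: "I \<in> E G0" and I4: "I \<in> E G4"
      obtain a b where ab: "I = {a,b}" using edge_form I0 by blast
      then obtain y where y: "I = {v0,y}" using v0I by (metis insert_commute insertE singletonD)
      have "{v0,v1} \<in> E G0" using G0 by simp
      then have y1: "y = v1 \<or> y = A" using two_nbrs[OF G0(1) _ A(2) _ A(1)[symmetric]] I0 y by blast
      have "{v0,v4} \<in> E G4" using G4 by (simp add: insert_commute)
      then have y2: "y = v4 \<or> y = B" using two_nbrs[OF G4(1) _ B(2) _ B(1)[symmetric]] I4 y by blast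
      have f01: "{v0,v1} \<in> E f" "{v0,v4} \<in> E f" using e01 e40 by (simp_all add: insert_commute)
      show ?thesis
      proof -
        { assume "y = v1" "y = B"
          then have "{v0,v1} \<in> E G4" using I4 y by simp
          then have "G4 = f \<or> G4 = G0"
            using two_faces[OF f f01(1) f G0(1) G0(2)[symmetric] f01(1) G0(3) G4(1)] by blast
          then have False using G4(2) G04 by blast }
        moreover
        { assume "y = A" "y = v4"
          then have "{v0,v4} \<in> E G0" using I0 y by simp
          then have "G0 = f \<or> G0 = G4"
            using two_faces[OF f f01(2) f G4(1) G4(2)[symmetric] f01(2) _ G0(1)] G4(3)
            by (simp add: insert_commute)
          then have False using G0(2) G04 by blast }
        ultimately show ?thesis using y1 y2 d(7) False by blast
      qed
    qed
  qed
qed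

end

context rps5 begin

lemma vdeg_eq: assumes "f \<in> F" "v \<in> set (bd f)" shows "vdeg F bd v = card (N v)"
proof -
  define Ev where "Ev = {e \<in> rps_edges F bd. v \<in> e}"
  have finR: "finite (rps_edges F bd)" unfolding rps_edges_def using finF finE by auto
  have finEv: "finite Ev" unfolding Ev_def using finR by simp
  have A: "card {g\<in>N v. e \<in> E g} = 2" if e: "e \<in> Ev" for e
  proof -
    obtain g0 where g0: "g0 \<in> F" "e \<in> E g0" using e unfolding Ev_def rps_edges_def by blast
    have ve: "v \<in> e" using e unfolding Ev_def by simp
    have "{g\<in>N v. e \<in> E g} = {g\<in>F. e \<in> E g}"
    proof (rule set_eqI, rule iffI)
      fix g assume g: "g \<in> {g\<in>F. e \<in> E g}"
      then obtain a b where ab: "e = {a,b}" using edge_form by blast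
      have "a \<in> set (bd g)" "b \<in> set (bd g)" using edge_mem[of g a b] g ab by auto
      then have "v \<in> set (bd g)" using ve ab by auto
      then show "g \<in> {g\<in>N v. e \<in> E g}" using g inN by auto
    qed (auto simp: faces_at_def)
    then show ?thesis using card2 g0 by simp
  qed
  have B: "card {e\<in>Ev. e \<in> E g} = 2" if g: "g \<in> N v" for g
  proof -
    have gF: "g \<in> F" "v \<in> set (bd g)" using g unfolding faces_at_def by auto
    have "{e\<in>Ev. e \<in> E g} = {e\<in>E g. v \<in> e}" unfolding Ev_def rps_edges_def using gF by auto
    then show ?thesis using edges_at[OF gF] by simp
  qed
  have "2 * card Ev = (\<Sum>e\<in>Ev. card {g\<in>N v. e \<in> E g})" using A by simp
  also have "\<dots> = (\<Sum>e\<in>Ev. \<Sum>g\<in>N v. if e \<in> E g then 1 else 0)"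
    using card_filter_sum[OF finN] by simp
  also have "\<dots> = (\<Sum>g\<in>N v. \<Sum>e\<in>Ev. if e \<in> E g then 1 else 0)" by (rule sum.swap)
  also have "\<dots> = (\<Sum>g\<in>N v. card {e\<in>Ev. e \<in> E g})"
    using card_filter_sum[OF finEv] by simp
  also have "\<dots> = 2 * card (N v)" using B by simp
  finally show ?thesis unfolding vdeg_def Ev_def by simp
qed

lemma n_ge3: assumes f: "f \<in> F" and v: "v \<in> set (bd f)" shows "card (N v) \<ge> 3"
proof -
  obtain y z where yz: "y \<noteq> z" "{v,y} \<in> E f" "{v,z} \<in> E f" using nbrs_exist[OF f v] by blast
  obtain Gy where Gy: "Gy \<in> F" "Gy \<noteq> f" "{v,y} \<in> E Gy" using opp_exists[OF f yz(2)] by blast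
  obtain Gz where Gz: "Gz \<in> F" "Gz \<noteq> f" "{v,z} \<in> E Gz" using opp_exists[OF f yz(3)] by blast
  have m: "v \<noteq> y" "v \<noteq> z" "y \<in> set (bd f)" "z \<in> set (bd f)"
    using edge_mem[OF f yz(2)] edge_mem[OF f yz(3)] by auto
  have my: "v \<in> set (bd Gy)" "y \<in> set (bd Gy)" using edge_mem[OF Gy(1) Gy(3)] by auto
  have mz: "v \<in> set (bd Gz)" "z \<in> set (bd Gz)" using edge_mem[OF Gz(1) Gz(3)] by auto
  have "Gy \<noteq> Gz"
  proof
    assume "Gy = Gz"
    then show False using inter3[OF Gy(1) f Gy(2) m(1)[symmetric] m(2) yz(1)] my mz m v by auto
  qed
  then have "card {f,Gy,Gz} = 3" using Gy(2) Gz(2) by auto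
  moreover have "{f,Gy,Gz} \<subseteq> N v" using inN f Gy(1) Gz(1) v my mz by auto
  ultimately show ?thesis using card_mono[OF finN] by metis
qed

lemma vc_eq: "vertex_curvature F bd v = 2 * pi - real (card (N v)) * (3 * pi / 5)"
proof -
  have "(\<Sum>g\<in>N v. reg_angle (length (bd g))) = (\<Sum>g\<in>N v. 3 * pi / 5)"
    by (rule sum.cong) (auto simp: faces_at_def five reg_angle_def)
  then show ?thesis unfolding vertex_curvature_def by simp
qed

lemma Gprime: assumes f: "f \<in> F" and v: "v \<in> set (bd f)" and nv: "card (N v) \<noteq> 3"
  shows "\<exists>v'\<in>set (bd f). v' \<noteq> v \<and> card (N v') \<noteq> 3"
proof (rule ccontr)
  assume "\<not> ?thesis"
  then have all: "\<And>v'. v' \<in> set (bd f) \<Longrightarrow> v' \<noteq> v \<Longrightarrow> card (N v') = 3" by blast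
  obtain a0 a1 a2 a3 a4 where h: "bd f = [a0,a1,a2,a3,a4]" "distinct [a0,a1,a2,a3,a4]"
    by (rule list5[OF f])
  have es: "{a0,a1} \<in> E f" "{a1,a2} \<in> E f" "{a2,a3} \<in> E f" "{a3,a4} \<in> E f" "{a4,a0} \<in> E f"
    unfolding fe5[of bd f, OF h(1)] by auto
  have c: "card (N a0) = 3 \<or> a0 = v" "card (N a1) = 3 \<or> a1 = v" "card (N a2) = 3 \<or> a2 = v"
    "card (N a3) = 3 \<or> a3 = v" "card (N a4) = 3 \<or> a4 = v" using all h(1) by auto
  have d: "distinct [a1,a2,a3,a4,a0]" "distinct [a2,a3,a4,a0,a1]" "distinct [a3,a4,a0,a1,a2]"
    "distinct [a4,a0,a1,a2,a3]" using h(2) by auto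
  from v h(1) have "v = a0 \<or> v = a1 \<or> v = a2 \<or> v = a3 \<or> v = a4" by simp
  then show False
  proof (elim disjE)
    assume "v = a0" then show False using Glem[OF f h(2) es] c nv h(2) by auto
  next
    assume "v = a1" then show False using Glem[OF f d(1) es(2-5) es(1)] c nv h(2) by auto
  next
    assume "v = a2" then show False using Glem[OF f d(2) es(3-5) es(1-2)] c nv h(2) by auto
  next
    assume "v = a3" then show False using Glem[OF f d(3) es(4-5) es(1-3)] c nv h(2) by auto
  next
    assume "v = a4" then show False using Glem[OF f d(4) es(5) es(1-4)] c nv h(2) by auto
  qed
qed

lemma term_eq: assumes "f \<in> F" "v \<in> set (bd f)"
  shows "vertex_curvature F bd v / real (vdeg F bd v) = 2 * pi / real (card (N v)) - 3 * pi / 5"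
proof -
  have "card (N v) \<ge> 3" using n_ge3 assms by blast
  then have "real (card (N v)) > 0" by simp
  then show ?thesis unfolding vc_eq vdeg_eq[OF assms] by (simp add: field_simps)
qed

lemma term_le1: assumes "f \<in> F" "v \<in> set (bd f)"
  shows "vertex_curvature F bd v / real (vdeg F bd v) \<le> pi / 15"
proof -
  have n3: "real (card (N v)) \<ge> 3" using n_ge3 assms by simp
  have "2 * pi / real (card (N v)) \<le> 2 * pi / 3"
    by (rule divide_left_mono) (use n3 pi_gt_zero in auto)
  then show ?thesis unfolding term_eq[OF assms] by simp
qed

lemma term_le2: assumes "f \<in> F" "v \<in> set (bd f)" "card (N v) \<noteq> 3"
  shows "vertex_curvature F bd v / real (vdeg F bd v) \<le> - pi / 10"
proof -
  have "card (N v) \<ge> 4" using n_ge3[OF assms(1,2)] assms(3) by simp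
  then have n4: "real (card (N v)) \<ge> 4" by simp
  have "2 * pi / real (card (N v)) \<le> 2 * pi / 4"
    by (rule divide_left_mono) (use n4 pi_gt_zero in auto)
  then show ?thesis unfolding term_eq[OF assms(1,2)] by simp
qed

lemma sum_le0: assumes f: "f \<in> F" and a: "a \<in> set (bd f)" and b: "b \<in> set (bd f)" and ab: "a \<noteq> b"
  and na: "card (N a) \<noteq> 3" and nb: "card (N b) \<noteq> 3"
  shows "facial_curvature F bd f \<le> 0"
proof -
  let ?t = "\<lambda>v. vertex_curvature F bd v / real (vdeg F bd v)"
  let ?V = "set (bd f)"
  have cV: "card ?V = 5" using distF[OF f] five f by (simp add: distinct_card)
  have fin: "finite ?V" by simp
  have bV: "b \<in> ?V - {a}" using b ab by simp
  have "facial_curvature F bd f = ?t a + (?t b + sum ?t (?V - {a} - {b}))"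
    unfolding facial_curvature_def
    using sum.remove[OF fin a, of ?t] sum.remove[OF _ bV, of ?t] fin by simp
  moreover have "card (?V - {a} - {b}) = 3" using cV a bV by (simp add: card_Diff_singleton)
  moreover have "sum ?t (?V - {a} - {b}) \<le> real (card (?V - {a} - {b})) * (pi / 15)"
    using sum_bounded_above[of "?V - {a} - {b}" ?t "pi/15"] term_le1[OF f] by auto
  moreover have "?t a \<le> - pi / 10" "?t b \<le> - pi / 10" using term_le2 f a b na nb by auto
  ultimately show ?thesis by simp
qed

lemma main: assumes f: "f \<in> F"
  shows "(facial_curvature F bd f > 0 \<longrightarrow> (\<forall>v\<in>set (bd f). vdeg F bd v = 3)) \<and>
         ((\<exists>v\<in>set (bd f). vertex_curvature F bd v < 0) \<longrightarrow> facial_curvature F bd f \<le> 0)"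
proof (intro conjI impI)
  assume pos: "facial_curvature F bd f > 0"
  show "\<forall>v\<in>set (bd f). vdeg F bd v = 3"
  proof (rule ccontr)
    assume "\<not> ?thesis"
    then obtain v where v: "v \<in> set (bd f)" "vdeg F bd v \<noteq> 3" by blast
    then have nv: "card (N v) \<noteq> 3" using vdeg_eq[OF f v(1)] by simp
    obtain v' where "v' \<in> set (bd f)" "v' \<noteq> v" "card (N v') \<noteq> 3" using Gprime[OF f v(1) nv] by blast
    then have "facial_curvature F bd f \<le> 0" using sum_le0[OF f v(1)] nv by metis
    then show False using pos by simp
  qed
next
  assume "\<exists>v\<in>set (bd f). vertex_curvature F bd v < 0"
  then obtain v where v: "v \<in> set (bd f)" "vertex_curvature F bd v < 0" by blast
  have nv: "card (N v) \<noteq> 3"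
  proof
    assume "card (N v) = 3"
    then have "vertex_curvature F bd v = pi / 5" unfolding vc_eq by simp
    then show False using v(2) pi_gt_zero by simp
  qed
  obtain v' where "v' \<in> set (bd f)" "v' \<noteq> v" "card (N v') \<noteq> 3" using Gprime[OF f v(1) nv] by blast
  then show "facial_curvature F bd f \<le> 0" using sum_le0[OF f v(1)] nv by metis
qed

end

theorem lemma2p2:
  fixes F :: "'f set" and bd :: "'f \<Rightarrow> 'v list" and p :: "'v \<Rightarrow> real^3" and f :: 'f
  assumes "is_rps F bd p"
    and "\<forall>g\<in>F. length (bd g) = 5"
    and "f \<in> F"
  shows "(facial_curvature F bd f > 0 \<longrightarrow> (\<forall>v\<in>set (bd f). vdeg F bd v = 3)) \<and>
         ((\<exists>v\<in>set (bd f). vertex_curvature F bd v < 0) \<longrightarrow> facial_curvature F bd f \<le> 0)"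
proof -
  interpret rps5 F bd p using assms(1,2) by unfold_locales
  show ?thesis by (rule main[OF assms(3)])
qed

end
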